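(* Let $k\ge 1$, let $A_k$ be a $k$-atom and let $s$ be a seed of $A_k$. Then the tree $T_k$ is (isomorphic to) a subgraph of the path tree of $(A_k,s)$, and $T_k$ is equal to (isomorphic to) this path tree if and only if $A_k$ is isomorphic to $T_k$.
   Context: $k$-atoms are defined recursively: $K_1$ is the only $1$-atom (its vertex is its seed). A graph $H$ is a $(k+1)$-atom if its vertices can be partitioned into an independent set $I$ and a set inducing a $k$-atom $A_k$ such that each vertex of $A_k$ has exactly one neighbor in $I$ and each vertex of $I$ has at least one neighbor in $A_k$; a seed of $H$ is a seed of $A_k$ (i.e. a vertex that can serve as the initial vertex of the recursive construction). For each $k$ there is a unique $k$-atom that is a tree, denoted $T_k$ (it has $2^{k-1}$ vertices; $T_{k+1}$ is obtained from $T_k$ by attaching one new pendant vertex to each vertex). The path tree of $(G,u)$ is the rooted tree whose vertices are the paths in $G$ starting at $u$ (the root being the path of length $0$), two such paths being adjacent iff one is obtained from the other by appending one edge at its end. *)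

theory Defs
  imports Main
begin

type_synonym 'a graph = "'a set \<times> 'a set set"

abbreviation verts :: "'a graph \<Rightarrow> 'a set" where "verts G \<equiv> fst G"
abbreviation edges :: "'a graph \<Rightarrow> 'a set set" where "edges G \<equiv> snd G"

definition wf_graph :: "'a graph \<Rightarrow> bool" where
  "wf_graph G \<longleftrightarrow> finite (verts G) \<and>
     (\<forall>e\<in>edges G. \<exists>u v. e = {u, v} \<and> u \<noteq> v \<and> u \<in> verts G \<and> v \<in> verts G)"

definition adj :: "'a graph \<Rightarrow> 'a \<Rightarrow> 'a \<Rightarrow> bool" where
  "adj G u v \<longleftrightarrow> u \<noteq> v \<and> {u, v} \<in> edges G"

definition induced :: "'a graph \<Rightarrow> 'a set \<Rightarrow> 'a graph" where
  "induced G S = (S, {e \<in> edges G. e \<subseteq> S})"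

definition graph_iso :: "'a graph \<Rightarrow> 'b graph \<Rightarrow> bool" where
  "graph_iso G H \<longleftrightarrow> (\<exists>f. bij_betw f (verts G) (verts H) \<and>
     (\<forall>u\<in>verts G. \<forall>v\<in>verts G. {u, v} \<in> edges G \<longleftrightarrow> {f u, f v} \<in> edges H))"

definition subgraph_iso :: "'a graph \<Rightarrow> 'b graph \<Rightarrow> bool" where
  "subgraph_iso G H \<longleftrightarrow> (\<exists>f. inj_on f (verts G) \<and> f ` verts G \<subseteq> verts H \<and>
     (\<forall>u\<in>verts G. \<forall>v\<in>verts G. {u, v} \<in> edges G \<longrightarrow> {f u, f v} \<in> edges H))"

inductive atom :: "nat \<Rightarrow> 'a graph \<Rightarrow> 'a \<Rightarrow> bool" where
  base: "atom 1 ({s}, {}) s"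
| step: "\<lbrakk> wf_graph H; atom k A s; verts A \<subseteq> verts H; A = induced H (verts A);
           \<forall>x\<in>verts H - verts A. \<forall>y\<in>verts H - verts A. \<not> adj H x y;
           \<forall>x\<in>verts A. \<exists>!i. i \<in> verts H - verts A \<and> adj H x i;
           \<forall>i\<in>verts H - verts A. \<exists>x\<in>verts A. adj H x i \<rbrakk>
         \<Longrightarrow> atom (Suc k) H s"

text \<open>The tree T_k on vertex set {0..<2^(k-1)}: T_1 = K_1 and T_(k+1) is obtained
  from T_k by attaching a new pendant vertex v + 2^(k-1) to each vertex v.\<close>
fun T :: "nat \<Rightarrow> nat graph" where
  "T 0 = ({}, {})"
| "T (Suc 0) = ({0}, {})"
| "T (Suc (Suc n)) =
     (verts (T (Suc n)) \<union> (\<lambda>v. v + 2 ^ n) ` verts (T (Suc n)),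
      edges (T (Suc n)) \<union> {{v, v + 2 ^ n} | v. v \<in> verts (T (Suc n))})"

definition is_path :: "'a graph \<Rightarrow> 'a list \<Rightarrow> bool" where
  "is_path G p \<longleftrightarrow> p \<noteq> [] \<and> distinct p \<and> set p \<subseteq> verts G \<and>
     (\<forall>i. Suc i < length p \<longrightarrow> adj G (p ! i) (p ! Suc i))"

definition path_tree :: "'a graph \<Rightarrow> 'a \<Rightarrow> 'a list graph" where
  "path_tree G u =
     ({p. is_path G p \<and> hd p = u},
      {{p, p @ [v]} | p v. is_path G p \<and> hd p = u \<and> is_path G (p @ [v])})"

end

theory Submission
  imports Defs
begin


lemma T_verts: "k \<ge> 1 \<Longrightarrow> verts (T k) = {0..<2^(k-1)}"
proof (induction k rule: T.induct)
  case (3 m)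
  have "{0..<(2::nat)^m} \<union> (\<lambda>v. v + 2^m) ` {0..<2^m} = {0..<2^(Suc m)}"
  proof (rule set_eqI, rule iffI)
    fix x :: nat assume "x \<in> {0..<2^Suc m}"
    then show "x \<in> {0..<(2::nat)^m} \<union> (\<lambda>v. v + 2^m) ` {0..<2^m}"
      by (cases "x < 2^m") (auto intro!: image_eqI[where x="x - 2^m"])
  qed auto
  then show ?case using 3 by (cases m) auto
qed auto

lemma T_edges_sub: "e \<in> edges (T k) \<Longrightarrow> \<exists>a b. e = {a,b} \<and> a < b \<and> b < 2^(k-1)"
proof (induction k arbitrary: e rule: T.induct)
  case (3 m)
  show ?case
  proof (cases "e \<in> edges (T (Suc m))")
    case True
    then obtain a b where "e = {a,b}" "a < b" "b < 2^m" using 3(1)[OF True] by auto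
    moreover have "(2::nat)^m < 2^Suc m" by simp
    ultimately show ?thesis by (metis diff_Suc_1 less_trans)
  next
    case False
    then obtain v where "e = {v, v + 2^m}" "v \<in> verts (T (Suc m))" using "3.prems" False by auto
    then show ?thesis using T_verts[of "Suc m"] by (intro exI[of _ v] exI[of _ "v + 2^m"]) auto
  qed
qed auto

lemma T_edges_Suc: "k \<ge> 1 \<Longrightarrow> edges (T (Suc k)) = edges (T k) \<union> {{v, v + 2^(k-1)} | v. v < 2^(k-1)}"
  by (cases k) (auto simp: T_verts[of "Suc _", simplified])

lemma T_edge_iff:
  assumes "k \<ge> 1" "n = 2^(k-1)" "u < 2*n" "v < 2*n"
  shows "{u,v} \<in> edges (T (Suc k)) \<longleftrightarrow> (u < n \<and> v < n \<and> {u,v} \<in> edges (T k)) \<or> v = u + n \<or> u = v + n"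
proof -
  have old: "{u,v} \<in> edges (T k) \<Longrightarrow> u < n \<and> v < n"
    using T_edges_sub[of "{u,v}" k] assms(2) by (auto simp: doubleton_eq_iff)
  show ?thesis
    using old T_edges_Suc[OF assms(1)] assms(2-4) by (auto simp: doubleton_eq_iff)
qed

lemma T_edge_neq: "{u,v} \<in> edges (T k) \<Longrightarrow> u \<noteq> v"
  using T_edges_sub[of "{u,v}" k] by (auto simp: doubleton_eq_iff)



lemma graph_iso_sym: assumes "graph_iso G H" shows "graph_iso H G"
proof -
  obtain f where f: "bij_betw f (verts G) (verts H)"
    and e: "\<forall>u\<in>verts G. \<forall>v\<in>verts G. {u, v} \<in> edges G \<longleftrightarrow> {f u, f v} \<in> edges H"
    using assms unfolding graph_iso_def by blast
  let ?g = "inv_into (verts G) f"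
  have g: "bij_betw ?g (verts H) (verts G)" using f by (rule bij_betw_inv_into)
  have "\<forall>u\<in>verts H. \<forall>v\<in>verts H. {u, v} \<in> edges H \<longleftrightarrow> {?g u, ?g v} \<in> edges G"
  proof (intro ballI)
    fix u v assume u: "u \<in> verts H" and v: "v \<in> verts H"
    have "f (?g u) = u" "f (?g v) = v" using f u v by (auto simp: bij_betw_inv_into_right)
    moreover have "?g u \<in> verts G" "?g v \<in> verts G" using g u v by (auto simp: bij_betw_def)
    ultimately show "{u, v} \<in> edges H \<longleftrightarrow> {?g u, ?g v} \<in> edges G" using e by metis
  qed
  then show ?thesis unfolding graph_iso_def using g by blast
qed

lemma extend_iso:
  fixes X :: "'b graph"
  assumes k: "k \<ge> 1" and n: "n = 2^(k-1)"
  and g: "bij_betw g {0..<n} Y"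
  and gE: "\<forall>u<n. \<forall>v<n. {u,v} \<in> edges (T k) \<longleftrightarrow> {g u, g v} \<in> edges X"
  and e: "bij_betw e Y J" and disj: "Y \<inter> J = {}" and V: "verts X = Y \<union> J"
  and YJ: "\<forall>y\<in>Y. \<forall>j\<in>J. {y,j} \<in> edges X \<longleftrightarrow> j = e y"
  and JJ: "\<forall>a\<in>J. \<forall>b\<in>J. {a,b} \<notin> edges X"
  shows "graph_iso (T (Suc k)) X"
proof -
  define G where "G v = (if v < n then g v else e (g (v - n)))" for v
  have VT: "verts (T (Suc k)) = {0..<2*n}" using T_verts[of "Suc k"] k n
    by (cases k) auto
  have b1: "bij_betw G {0..<n} Y" using g by (rule bij_betw_cong[THEN iffD1, rotated]) (auto simp: G_def)
  have sh: "bij_betw (\<lambda>v. v - n) {n..<2*n} {0..<n}"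
    unfolding bij_betw_def
  proof
    show "inj_on (\<lambda>v. v - n) {n..<2 * n}" by (auto simp: inj_on_def)
    show "(\<lambda>v. v - n) ` {n..<2 * n} = {0..<n}"
    proof (rule set_eqI, rule iffI)
      fix x assume "x \<in> {0..<n}" then show "x \<in> (\<lambda>v. v - n) ` {n..<2 * n}"
        by (intro image_eqI[where x="x+n"]) auto
    qed auto
  qed
  have "bij_betw (e \<circ> g \<circ> (\<lambda>v. v - n)) {n..<2*n} J"
    using bij_betw_trans[OF bij_betw_trans[OF sh g] e] by (simp add: comp_assoc)
  then have b2: "bij_betw G {n..<2*n} J"
    by (rule bij_betw_cong[THEN iffD1, rotated]) (auto simp: G_def)
  have "bij_betw G ({0..<n} \<union> {n..<2*n}) (Y \<union> J)"
    by (rule bij_betw_combine[OF b1 b2 disj])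
  moreover have "{0..<n} \<union> {n..<2*n} = {0..<2*n}" by auto
  ultimately have bG: "bij_betw G (verts (T (Suc k))) (verts X)" using VT V by simp
  have gY: "\<And>u. u < n \<Longrightarrow> g u \<in> Y" using g by (auto simp: bij_betw_def)
  have gI: "\<And>u v. u < n \<Longrightarrow> v < n \<Longrightarrow> g u = g v \<Longrightarrow> u = v" using g by (auto simp: bij_betw_def inj_on_def)
  have eJ: "\<And>y. y \<in> Y \<Longrightarrow> e y \<in> J" using e by (auto simp: bij_betw_def)
  have eI: "\<And>x y. x \<in> Y \<Longrightarrow> y \<in> Y \<Longrightarrow> e x = e y \<Longrightarrow> x = y" using e by (auto simp: bij_betw_def inj_on_def)
  have "\<forall>u\<in>verts (T (Suc k)). \<forall>v\<in>verts (T (Suc k)). {u, v} \<in> edges (T (Suc k)) \<longleftrightarrow> {G u, G v} \<in> edges X"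
  proof (intro ballI)
    fix u v assume "u \<in> verts (T (Suc k))" "v \<in> verts (T (Suc k))"
    then have u: "u < 2*n" and v: "v < 2*n" using VT by auto
    have TE: "{u,v} \<in> edges (T (Suc k)) \<longleftrightarrow> (u < n \<and> v < n \<and> {u,v} \<in> edges (T k)) \<or> v = u + n \<or> u = v + n"
      by (rule T_edge_iff[OF k n u v])
    show "{u, v} \<in> edges (T (Suc k)) \<longleftrightarrow> {G u, G v} \<in> edges X"
    proof (cases "u < n")
      case True note uu = True
      show ?thesis
      proof (cases "v < n")
        case True
        then show ?thesis using uu TE gE by (auto simp: G_def)
      next
        case False
        have "{G u, G v} \<in> edges X \<longleftrightarrow> e (g (v - n)) = e (g u)"
          using YJ gY eJ uu False v by (auto simp: G_def)
        also have "\<dots> \<longleftrightarrow> v - n = u" using eI gY gI uu False v by (metis diff_less_mono le_eq_less_or_eq not_less mult_2 add_diff_cancel_right')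
        finally show ?thesis using TE uu False by auto
      qed
    next
      case False note uu = False
      show ?thesis
      proof (cases "v < n")
        case True
        have "{G u, G v} \<in> edges X \<longleftrightarrow> e (g (u - n)) = e (g v)"
          using YJ gY eJ uu True u by (auto simp: G_def insert_commute)
        also have "\<dots> \<longleftrightarrow> u - n = v" using eI gY gI uu True u by (metis diff_less_mono le_eq_less_or_eq not_less mult_2 add_diff_cancel_right')
        finally show ?thesis using TE uu True by auto
      next
        case False
        then show ?thesis using uu TE JJ eJ gY u v by (auto simp: G_def)
      qed
    qed
  qed
  then show ?thesis unfolding graph_iso_def using bG by blast
qed



lemma adj_sym: "adj G u v \<longleftrightarrow> adj G v u"
  unfolding adj_def by (metis insert_commute)

lemma is_path_single[simp]: "is_path G [v] \<longleftrightarrow> v \<in> verts G"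
  by (auto simp: is_path_def)

lemma is_path_snoc:
  assumes "p \<noteq> []"
  shows "is_path G (p @ [v]) \<longleftrightarrow> is_path G p \<and> v \<notin> set p \<and> v \<in> verts G \<and> adj G (last p) v"
proof
  assume H: "is_path G (p @ [v])"
  have "\<forall>i. Suc i < length p \<longrightarrow> adj G (p ! i) (p ! Suc i)"
  proof (intro allI impI)
    fix i assume "Suc i < length p"
    then show "adj G (p ! i) (p ! Suc i)" using H unfolding is_path_def
      by (metis (no_types, lifting) Suc_lessD length_append_singleton less_SucI nth_append_left)
  qed
  moreover have "adj G (last p) v"
  proof -
    have "Suc (length p - 1) < length (p @ [v])" using assms by simp
    then have "adj G ((p@[v]) ! (length p - 1)) ((p@[v]) ! Suc (length p - 1))" using H unfolding is_path_def by blast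
    then show ?thesis using assms by (simp add: nth_append last_conv_nth)
  qed
  ultimately show "is_path G p \<and> v \<notin> set p \<and> v \<in> verts G \<and> adj G (last p) v"
    using H assms unfolding is_path_def by auto
next
  assume H: "is_path G p \<and> v \<notin> set p \<and> v \<in> verts G \<and> adj G (last p) v"
  have "\<forall>i. Suc i < length (p@[v]) \<longrightarrow> adj G ((p@[v]) ! i) ((p@[v]) ! Suc i)"
  proof (intro allI impI)
    fix i assume i: "Suc i < length (p@[v])"
    show "adj G ((p@[v]) ! i) ((p@[v]) ! Suc i)"
    proof (cases "Suc i < length p")
      case True then show ?thesis using H unfolding is_path_def by (simp add: nth_append)
    next
      case False
      then have "i = length p - 1" "Suc i = length p" using i by auto
      then show ?thesis using H assms by (simp add: nth_append last_conv_nth)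
    qed
  qed
  then show "is_path G (p @ [v])" using H unfolding is_path_def by auto
qed

lemma is_path_prefix: "is_path G (p @ q) \<Longrightarrow> p \<noteq> [] \<Longrightarrow> is_path G p"
proof (induction q rule: rev_induct)
  case (snoc x xs)
  have "is_path G (p @ xs)" using snoc.prems is_path_snoc[of "p @ xs" G x] by simp
  then show ?case using snoc.IH snoc.prems(2) by blast
qed simp

lemma is_path_set: "is_path G p \<Longrightarrow> set p \<subseteq> verts G"
  by (simp add: is_path_def)

lemma finite_pt: assumes "finite (verts G)" shows "finite (verts (path_tree G u))"
proof -
  have "verts (path_tree G u) \<subseteq> {p. set p \<subseteq> verts G \<and> length p \<le> card (verts G)}"
  proof
    fix p assume "p \<in> verts (path_tree G u)"
    then have "distinct p" "set p \<subseteq> verts G" unfolding path_tree_def is_path_def by auto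
    then show "p \<in> {p. set p \<subseteq> verts G \<and> length p \<le> card (verts G)}"
    proof -
      have "length p = card (set p)" using \<open>distinct p\<close> by (simp add: distinct_card)
      also have "\<dots> \<le> card (verts G)" using card_mono[OF assms \<open>set p \<subseteq> verts G\<close>] .
      finally show ?thesis using \<open>set p \<subseteq> verts G\<close> by simp
    qed
  qed
  moreover have "finite {p. set p \<subseteq> verts G \<and> length p \<le> card (verts G)}"
    by (rule finite_lists_length_le[OF assms])
  ultimately show ?thesis by (rule finite_subset)
qed

lemma pt_verts: "p \<in> verts (path_tree G u) \<longleftrightarrow> is_path G p \<and> hd p = u"
  by (simp add: path_tree_def)

lemma pt_edges: "e \<in> edges (path_tree G u) \<longleftrightarrow> (\<exists>p v. e = {p, p @ [v]} \<and> is_path G p \<and> hd p = u \<and> is_path G (p @ [v]))"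
  by (simp add: path_tree_def)



definition conn :: "'a graph \<Rightarrow> 'a \<Rightarrow> bool" where
  "conn G s \<longleftrightarrow> (\<forall>v\<in>verts G. \<exists>p. is_path G p \<and> hd p = s \<and> last p = v)"

locale stp =
  fixes H :: "'a graph" and A :: "'a graph" and s :: 'a
  assumes wf: "wf_graph H" and sA: "s \<in> verts A" and sub: "verts A \<subseteq> verts H"
  and ind: "A = induced H (verts A)"
  and indep: "\<forall>x\<in>verts H - verts A. \<forall>y\<in>verts H - verts A. \<not> adj H x y"
  and uniq: "\<forall>x\<in>verts A. \<exists>!i. i \<in> verts H - verts A \<and> adj H x i"
  and cov: "\<forall>i\<in>verts H - verts A. \<exists>x\<in>verts A. adj H x i"
begin

abbreviation "I \<equiv> verts H - verts A"
definition nb where "nb x = (THE i. i \<in> I \<and> adj H x i)"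

lemma nb: "x \<in> verts A \<Longrightarrow> nb x \<in> I \<and> adj H x (nb x)"
  unfolding nb_def using uniq by (metis (no_types, lifting) theI')

lemma nb_eq: "x \<in> verts A \<Longrightarrow> i \<in> I \<Longrightarrow> adj H x i \<Longrightarrow> nb x = i"
  unfolding nb_def using uniq by (metis (no_types, lifting) the1_equality)

lemma finH: "finite (verts H)" using wf by (simp add: wf_graph_def)
lemma finA: "finite (verts A)" using finite_subset[OF sub finH] .

lemma edgesA: "edges A = {e \<in> edges H. e \<subseteq> verts A}"
  using ind by (metis induced_def snd_conv)

lemma adjA: "u \<in> verts A \<Longrightarrow> v \<in> verts A \<Longrightarrow> adj A u v \<longleftrightarrow> adj H u v"
  by (auto simp: adj_def edgesA)

lemma pathA_H: "is_path A p \<Longrightarrow> is_path H p"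
  unfolding is_path_def using sub adjA
  by (metis nth_mem subset_trans Suc_lessD subsetD)

lemma pathH_A: "is_path H p \<Longrightarrow> set p \<subseteq> verts A \<Longrightarrow> is_path A p"
  unfolding is_path_def using adjA
  by (metis nth_mem Suc_lessD subsetD)

definition "pend \<longleftrightarrow> (\<forall>i\<in>I. \<forall>x\<in>verts A. \<forall>y\<in>verts A. adj H x i \<longrightarrow> adj H y i \<longrightarrow> x = y)"
definition "ext p = p @ [nb (last p)]"

abbreviation "PA \<equiv> verts (path_tree A s)"
abbreviation "PH \<equiv> verts (path_tree H s)"

lemma PA_props: "p \<in> PA \<Longrightarrow> p \<noteq> [] \<and> set p \<subseteq> verts A \<and> last p \<in> verts A \<and> hd p = s \<and> is_path A p"
  by (auto simp: pt_verts is_path_def)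

lemma ext_path: "p \<in> PA \<Longrightarrow> ext p \<in> PH \<and> is_path H (ext p)"
proof -
  assume p: "p \<in> PA"
  note P = PA_props[OF p]
  have "nb (last p) \<notin> set p" using nb[of "last p"] P by auto
  then have "is_path H (ext p)" unfolding ext_def
    using is_path_snoc[of p H "nb (last p)"] P pathA_H nb[of "last p"] by auto
  moreover have "hd (ext p) = s" using P by (simp add: ext_def)
  ultimately show ?thesis by (simp add: pt_verts)
qed

lemma PA_PH: "PA \<subseteq> PH" using pathA_H by (auto simp: pt_verts)

lemma ext_inj: "inj_on ext PA"
  unfolding inj_on_def ext_def by (metis butlast_snoc)

lemma ext_last: "p \<in> PA \<Longrightarrow> last (ext p) \<in> I"
  using nb PA_props by (simp add: ext_def)

lemma PA_ext_disj: "PA \<inter> ext ` PA = {}"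
  using ext_last PA_props by fastforce

lemma card_union: "card (PA \<union> ext ` PA) = 2 * card PA"
proof -
  have f: "finite PA" using finite_pt[OF finA] .
  have "card (PA \<union> ext ` PA) = card PA + card (ext ` PA)"
    using f PA_ext_disj by (simp add: card_Un_disjoint)
  also have "card (ext ` PA) = card PA" using ext_inj by (simp add: card_image)
  finally show ?thesis by simp
qed

lemma finPH: "finite PH" using finite_pt[OF finH] .

lemma union_sub: "PA \<union> ext ` PA \<subseteq> PH" using PA_PH ext_path by blast

lemma card_PH_ge: "2 * card PA \<le> card PH"
  using card_mono[OF finPH union_sub] card_union by simp

lemma pend_path: "pend \<Longrightarrow> is_path H p \<Longrightarrow> hd p = s \<Longrightarrow> set p \<subseteq> verts A \<or> (\<exists>q. p = ext q \<and> q \<in> PA)"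
proof (induction p rule: rev_induct)
  case Nil then show ?case by (simp add: is_path_def)
next
  case (snoc w q)
  show ?case
  proof (cases "q = []")
    case True then show ?thesis using snoc.prems sA by simp
  next
    case False
    have qp: "is_path H q" and wq: "w \<notin> set q" "w \<in> verts H" "adj H (last q) w"
      using is_path_snoc[OF False] snoc.prems by auto
    have hq: "hd q = s" using snoc.prems False by simp
    from snoc.IH[OF snoc.prems(1) qp hq] show ?thesis
    proof
      assume qA: "set q \<subseteq> verts A"
      show ?thesis
      proof (cases "w \<in> verts A")
        case True then show ?thesis using qA by simp
      next
        case False
        have lq: "last q \<in> verts A" using qA \<open>q \<noteq> []\<close> by auto
        have "nb (last q) = w" using nb_eq[OF lq] False wq by auto
        moreover have "q \<in> PA" using pathH_A[OF qp qA] hq by (simp add: pt_verts)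
        ultimately show ?thesis by (auto simp: ext_def)
      qed
    next
      assume "\<exists>r. q = ext r \<and> r \<in> PA"
      then obtain r where r: "q = ext r" "r \<in> PA" by blast
      note R = PA_props[OF r(2)]
      have lqI: "last q \<in> I" using ext_last r by simp
      have wA: "w \<in> verts A" using indep lqI wq by blast
      have "adj H w (last q)" using wq adj_sym by metis
      moreover have "adj H (last r) (last q)" using nb R r by (simp add: ext_def)
      ultimately have "w = last r" using snoc.prems(1) unfolding pend_def using lqI wA R by blast
      moreover have "last r \<in> set q" using R r by (simp add: ext_def)
      ultimately show ?thesis using wq by simp
    qed
  qed
qed

lemma pend_PH: "pend \<Longrightarrow> PH = PA \<union> ext ` PA"
proof
  assume p: pend
  show "PH \<subseteq> PA \<union> ext ` PA"
  proof
    fix p assume "p \<in> PH"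
    then have pp: "is_path H p" "hd p = s" by (auto simp: pt_verts)
    from pend_path[OF p pp] show "p \<in> PA \<union> ext ` PA"
      using pathH_A pp by (auto simp: pt_verts)
  qed
qed (rule union_sub)


lemma connH: "conn A s \<Longrightarrow> conn H s"
  unfolding conn_def
proof
  fix v assume c: "\<forall>v\<in>verts A. \<exists>p. is_path A p \<and> hd p = s \<and> last p = v" and v: "v \<in> verts H"
  show "\<exists>p. is_path H p \<and> hd p = s \<and> last p = v"
  proof (cases "v \<in> verts A")
    case True then show ?thesis using c pathA_H by blast
  next
    case False
    then obtain x where x: "x \<in> verts A" "adj H x v" using cov v by blast
    then obtain p where p: "is_path A p" "hd p = s" "last p = x" using c by blast
    have "p \<noteq> []" "set p \<subseteq> verts A" using p by (auto simp: is_path_def)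
    then have "is_path H (p @ [v])" using is_path_snoc[of p H v] pathA_H[OF p(1)] p x v False by auto
    then show ?thesis using p \<open>p \<noteq> []\<close> by (intro exI[of _ "p @ [v]"]) simp
  qed
qed

lemma nonpend: assumes c: "conn A s" and np: "\<not> pend" shows "2 * card PA < card PH"
proof -
  obtain i x y where i: "i \<in> I" and xy: "x \<in> verts A" "y \<in> verts A" "adj H x i" "adj H y i" "x \<noteq> y"
    using np unfolding pend_def by blast
  obtain p where p: "is_path A p" "hd p = s" "last p = x" using c xy unfolding conn_def by blast
  have pne: "p \<noteq> []" and pA: "set p \<subseteq> verts A" using p by (auto simp: is_path_def)
  have iv: "i \<in> verts H" using i by simp
  have "\<exists>q. is_path H q \<and> hd q = s \<and> i \<in> set q \<and> last q \<in> verts A"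
  proof (cases "y \<in> set p")
    case False
    have q1: "is_path H (p @ [i])" using is_path_snoc[OF pne, of H i] pathA_H[OF p(1)] pA i p xy by auto
    have "adj H i y" using xy adj_sym by metis
    then have "is_path H ((p @ [i]) @ [y])" using is_path_snoc[of "p@[i]" H y] q1 False xy i sub by auto
    then show ?thesis using p pne xy by (intro exI[of _ "(p @ [i]) @ [y]"]) auto
  next
    case True
    then obtain p1 p2 where sp: "p = p1 @ y # p2" by (meson split_list)
    have "p2 \<noteq> []" using sp p xy by auto
    then have "x \<in> set p2" using sp p by auto
    then have xn: "x \<notin> set (p1 @ [y])" using sp p(1) by (auto simp: is_path_def)
    have p1p: "is_path A (p1 @ [y])" using is_path_prefix[of A "p1 @ [y]" p2] sp p by simp
    have ly: "last (p1 @ [y]) = y" by simp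
    have p1A: "set (p1 @ [y]) \<subseteq> verts A" using p1p by (simp add: is_path_def)
    have q1: "is_path H ((p1 @ [y]) @ [i])"
      using is_path_snoc[of "p1 @ [y]" H i] pathA_H[OF p1p] p1A i xy by auto
    have "adj H i x" using xy adj_sym by metis
    then have "is_path H ((p1 @ [y]) @ [i] @ [x])" using is_path_snoc[of "(p1@[y])@[i]" H x] q1 xn xy i sub by auto
    moreover have "hd ((p1 @ [y]) @ [i] @ [x]) = s" using sp p by (cases p1) auto
    ultimately show ?thesis using xy by (intro exI[of _ "(p1 @ [y]) @ [i] @ [x]"]) auto
  qed
  then obtain q where q: "is_path H q" "hd q = s" "i \<in> set q" "last q \<in> verts A" by blast
  have "q \<in> PH" using q by (simp add: pt_verts)
  moreover have "q \<notin> PA" using q i PA_props by blast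
  moreover have "q \<notin> ext ` PA" using q ext_last by fastforce
  ultimately have "PA \<union> ext ` PA \<subset> PH" using union_sub by blast
  then have "card (PA \<union> ext ` PA) < card PH" by (rule psubset_card_mono[OF finPH])
  then show ?thesis using card_union by linarith
qed

lemma I_img: "nb ` verts A = I"
proof
  show "nb ` verts A \<subseteq> I" using nb by auto
  show "I \<subseteq> nb ` verts A"
  proof
    fix i assume i: "i \<in> I"
    then obtain x where "x \<in> verts A" "adj H x i" using cov by blast
    then show "i \<in> nb ` verts A" using nb_eq i by (metis image_eqI)
  qed
qed

lemma card_H: "card (verts H) = card (verts A) + card I"
proof -
  have e: "verts H = verts A \<union> I" using sub by auto
  have "card (verts A \<union> I) = card (verts A) + card I"
    by (rule card_Un_disjoint) (use finA finH in auto)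
  then show ?thesis using e by simp
qed

lemma card_I_le: "card I \<le> card (verts A)"
  using card_image_le[OF finA, of nb] I_img by simp

lemma pend_inj: "pend \<longleftrightarrow> inj_on nb (verts A)"
proof
  assume p: pend
  show "inj_on nb (verts A)"
  proof (rule inj_onI)
    fix x y assume "x \<in> verts A" "y \<in> verts A" "nb x = nb y"
    then show "x = y" using p nb unfolding pend_def by metis
  qed
next
  assume "inj_on nb (verts A)"
  then show pend unfolding pend_def using nb_eq by (metis inj_onD)
qed

lemma pend_card: "pend \<longleftrightarrow> card I = card (verts A)"
proof
  assume pend then show "card I = card (verts A)" using pend_inj card_image I_img by metis
next
  assume "card I = card (verts A)"
  then have "inj_on nb (verts A)" using eq_card_imp_inj_on[OF finA] I_img by metis
  then show pend using pend_inj by simp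
qed

end


context stp begin

lemma PT_edges_PA:
  assumes p: "p \<in> PA" and q: "q \<in> PA"
  shows "{p,q} \<in> edges (path_tree H s) \<longleftrightarrow> {p,q} \<in> edges (path_tree A s)"
proof
  assume "{p,q} \<in> edges (path_tree H s)"
  then obtain r v where rv: "{p,q} = {r, r @ [v]}" "is_path H r" "hd r = s" "is_path H (r @ [v])"
    by (auto simp: pt_edges)
  have "r \<in> PA" "r @ [v] \<in> PA" using rv(1) p q by (auto simp: doubleton_eq_iff)
  then show "{p,q} \<in> edges (path_tree A s)" using rv unfolding pt_edges pt_verts by blast
next
  assume "{p,q} \<in> edges (path_tree A s)"
  then obtain r v where rv: "{p,q} = {r, r @ [v]}" "is_path A r" "hd r = s" "is_path A (r @ [v])"
    by (auto simp: pt_edges)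
  then show "{p,q} \<in> edges (path_tree H s)" using pathA_H unfolding pt_edges by blast
qed

lemma ext_notin: "p \<in> PA \<Longrightarrow> q \<in> PA \<Longrightarrow> set (ext p) \<subseteq> set q \<Longrightarrow> False"
  using PA_props ext_last[of p] by (metis Diff_iff in_mono last_in_set snoc_eq_iff_butlast ext_def)

lemma PT_YJ:
  assumes p: "p \<in> PA" and q: "q \<in> PA"
  shows "{p, ext q} \<in> edges (path_tree H s) \<longleftrightarrow> ext q = ext p"
proof
  assume "{p, ext q} \<in> edges (path_tree H s)"
  then obtain r v where rv: "{p, ext q} = {r, r @ [v]}" by (auto simp: pt_edges)
  then consider "p = r" "ext q = r @ [v]" | "p = r @ [v]" "ext q = r" by (auto simp: doubleton_eq_iff)
  then show "ext q = ext p"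
  proof cases
    case 1
    then have "q = p" by (simp add: ext_def)
    then show ?thesis by simp
  next
    case 2
    then have "set (ext q) \<subseteq> set p" by auto
    then show ?thesis using ext_notin q p by blast
  qed
next
  assume "ext q = ext p"
  then show "{p, ext q} \<in> edges (path_tree H s)"
    using ext_path[OF p] PA_props[OF p] pathA_H unfolding pt_edges ext_def by blast
qed

lemma PT_JJ:
  assumes p: "p \<in> PA" and q: "q \<in> PA"
  shows "{ext p, ext q} \<notin> edges (path_tree H s)"
proof
  assume "{ext p, ext q} \<in> edges (path_tree H s)"
  then obtain r v where rv: "{ext p, ext q} = {r, r @ [v]}" by (auto simp: pt_edges)
  then consider "ext p = r" "ext q = r @ [v]" | "ext p = r @ [v]" "ext q = r" by (auto simp: doubleton_eq_iff)
  then show False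
  proof cases
    case 1
    then have "q = ext p" by (simp add: ext_def)
    then show ?thesis using ext_notin[of p q] p q by simp
  next
    case 2
    then have "p = ext q" by (simp add: ext_def)
    then show ?thesis using ext_notin[of q p] p q by simp
  qed
qed

lemma H_YJ: "y \<in> verts A \<Longrightarrow> j \<in> I \<Longrightarrow> {y,j} \<in> edges H \<longleftrightarrow> j = nb y"
proof
  assume y: "y \<in> verts A" and j: "j \<in> I" and "{y,j} \<in> edges H"
  then have "adj H y j" unfolding adj_def by auto
  then show "j = nb y" using nb_eq y j by simp
next
  assume y: "y \<in> verts A" and "j = nb y"
  then show "{y,j} \<in> edges H" using nb[OF y] by (simp add: adj_def)
qed

lemma H_JJ: "a \<in> I \<Longrightarrow> b \<in> I \<Longrightarrow> {a,b} \<notin> edges H"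
proof
  assume a: "a \<in> I" and b: "b \<in> I" and e: "{a,b} \<in> edges H"
  show False
  proof (cases "a = b")
    case True
    then show False using e wf unfolding wf_graph_def by (metis doubleton_eq_iff insert_absorb2)
  next
    case False
    then have "adj H a b" using e by (simp add: adj_def)
    then show False using indep a b by blast
  qed
qed

lemma step_emb:
  assumes k: "k \<ge> 1" and E: "subgraph_iso (T k) (path_tree A s)"
  shows "subgraph_iso (T (Suc k)) (path_tree H s)"
proof -
  define n where "n = (2::nat)^(k-1)"
  obtain f where f: "inj_on f (verts (T k))" "f ` verts (T k) \<subseteq> PA"
    and fe: "\<forall>u\<in>verts (T k). \<forall>v\<in>verts (T k). {u, v} \<in> edges (T k) \<longrightarrow> {f u, f v} \<in> edges (path_tree A s)"
    using E unfolding subgraph_iso_def by blast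
  have VT: "verts (T k) = {0..<n}" using T_verts[OF k] n_def by simp
  have VT2: "verts (T (Suc k)) = {0..<2*n}" using T_verts[of "Suc k"] k n_def by (cases k) auto
  define F where "F v = (if v < n then f v else ext (f (v - n)))" for v
  have fPA: "\<And>u. u < n \<Longrightarrow> f u \<in> PA" using f VT by auto
  have finj: "\<And>u v. u < n \<Longrightarrow> v < n \<Longrightarrow> f u = f v \<Longrightarrow> u = v" using f(1) VT by (auto simp: inj_on_def)
  have "inj_on F {0..<2*n}"
  proof (rule inj_onI)
    fix u v assume u: "u \<in> {0..<2*n}" and v: "v \<in> {0..<2*n}" and eq: "F u = F v"
    show "u = v"
    proof (cases "u < n"; cases "v < n")
      assume "u < n" "v < n" then show ?thesis using eq finj by (simp add: F_def)
    next
      assume a: "u < n" "\<not> v < n"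
      then have "f u \<in> PA" "F v \<in> ext ` PA" using fPA v by (auto simp: F_def)
      then show ?thesis using eq a PA_ext_disj by (auto simp: F_def)
    next
      assume a: "\<not> u < n" "v < n"
      then have "f v \<in> PA" "F u \<in> ext ` PA" using fPA u by (auto simp: F_def)
      then show ?thesis using eq a PA_ext_disj by (auto simp: F_def)
    next
      assume a: "\<not> u < n" "\<not> v < n"
      then have "ext (f (u - n)) = ext (f (v - n))" using eq by (simp add: F_def)
      then have "f (u - n) = f (v - n)" using ext_inj fPA a u v by (auto simp: inj_on_def)
      then show ?thesis using finj a u v by (metis atLeastLessThan_iff diff_less_mono mult_2 not_less add_diff_cancel_right' le_add_diff_inverse2)
    qed
  qed
  moreover have "F ` {0..<2*n} \<subseteq> PH"
  proof
    fix x assume "x \<in> F ` {0..<2*n}"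
    then obtain u where u: "u < 2*n" "x = F u" by auto
    show "x \<in> PH"
    proof (cases "u < n")
      case True then show ?thesis using u fPA PA_PH by (auto simp: F_def)
    next
      case False then have "u - n < n" using u by simp
      then show ?thesis using u False fPA ext_path by (auto simp: F_def)
    qed
  qed
  moreover have "\<forall>u\<in>{0..<2*n}. \<forall>v\<in>{0..<2*n}. {u, v} \<in> edges (T (Suc k)) \<longrightarrow> {F u, F v} \<in> edges (path_tree H s)"
  proof (intro ballI impI)
    fix u v assume u: "u \<in> {0..<2*n}" and v: "v \<in> {0..<2*n}" and e: "{u, v} \<in> edges (T (Suc k))"
    then have "(u < n \<and> v < n \<and> {u,v} \<in> edges (T k)) \<or> v = u + n \<or> u = v + n"
      using T_edge_iff[OF k n_def] by auto
    then consider "u < n" "v < n" "{u,v} \<in> edges (T k)" | "v = u + n" | "u = v + n" by blast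
    then show "{F u, F v} \<in> edges (path_tree H s)"
    proof cases
      case 1
      then have "{f u, f v} \<in> edges (path_tree A s)" using fe VT by auto
      then show ?thesis using PT_edges_PA fPA 1 by (simp add: F_def)
    next
      case 2
      then have "u < n" using v by simp
      then show ?thesis using PT_YJ[of "f u" "f u"] fPA 2 by (simp add: F_def)
    next
      case 3
      then have "v < n" using u by simp
      then show ?thesis using PT_YJ[of "f v" "f v"] fPA 3 by (simp add: F_def insert_commute)
    qed
  qed
  ultimately show ?thesis unfolding subgraph_iso_def using VT2 by metis
qed

lemma step_iso_H:
  assumes k: "k \<ge> 1" and p: pend and G: "graph_iso (T k) A"
  shows "graph_iso (T (Suc k)) H"
proof -
  define n where "n = (2::nat)^(k-1)"
  have VT: "verts (T k) = {0..<n}" using T_verts[OF k] n_def by simp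
  obtain g where g: "bij_betw g {0..<n} (verts A)"
    and ge: "\<forall>u\<in>{0..<n}. \<forall>v\<in>{0..<n}. {u, v} \<in> edges (T k) \<longleftrightarrow> {g u, g v} \<in> edges A"
    using G VT unfolding graph_iso_def by auto
  have gA: "\<And>u. u < n \<Longrightarrow> g u \<in> verts A" using g by (auto simp: bij_betw_def)
  show ?thesis
  proof (rule extend_iso[OF k n_def g, where J = I and e = nb])
    show "\<forall>u<n. \<forall>v<n. {u, v} \<in> edges (T k) \<longleftrightarrow> {g u, g v} \<in> edges H"
      using ge gA by (auto simp: edgesA)
    show "bij_betw nb (verts A) I" using p pend_inj I_img by (simp add: bij_betw_def)
    show "verts A \<inter> I = {}" by auto
    show "verts H = verts A \<union> I" using sub by auto
    show "\<forall>y\<in>verts A. \<forall>j\<in>I. {y, j} \<in> edges H \<longleftrightarrow> j = nb y" using H_YJ by blast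
    show "\<forall>a\<in>I. \<forall>b\<in>I. {a, b} \<notin> edges H" using H_JJ by blast
  qed
qed

lemma step_iso_PT:
  assumes k: "k \<ge> 1" and p: pend and G: "graph_iso (T k) (path_tree A s)"
  shows "graph_iso (T (Suc k)) (path_tree H s)"
proof -
  define n where "n = (2::nat)^(k-1)"
  have VT: "verts (T k) = {0..<n}" using T_verts[OF k] n_def by simp
  obtain g where g: "bij_betw g {0..<n} PA"
    and ge: "\<forall>u\<in>{0..<n}. \<forall>v\<in>{0..<n}. {u, v} \<in> edges (T k) \<longleftrightarrow> {g u, g v} \<in> edges (path_tree A s)"
    using G VT unfolding graph_iso_def by auto
  have gA: "\<And>u. u < n \<Longrightarrow> g u \<in> PA" using g by (auto simp: bij_betw_def)
  show ?thesis
  proof (rule extend_iso[OF k n_def g, where J = "ext ` PA" and e = ext])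
    show "\<forall>u<n. \<forall>v<n. {u, v} \<in> edges (T k) \<longleftrightarrow> {g u, g v} \<in> edges (path_tree H s)"
      using ge gA PT_edges_PA by auto
    show "bij_betw ext PA (ext ` PA)" using ext_inj by (simp add: bij_betw_def)
    show "PA \<inter> ext ` PA = {}" by (rule PA_ext_disj)
    show "PH = PA \<union> ext ` PA" using pend_PH p by simp
    show "\<forall>y\<in>PA. \<forall>j\<in>ext ` PA. {y, j} \<in> edges (path_tree H s) \<longleftrightarrow> j = ext y"
      using PT_YJ by blast
    show "\<forall>a\<in>ext ` PA. \<forall>b\<in>ext ` PA. {a, b} \<notin> edges (path_tree H s)" using PT_JJ by blast
  qed
qed

end



definition ainv :: "nat \<Rightarrow> 'a graph \<Rightarrow> 'a \<Rightarrow> bool" where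
  "ainv k A s \<longleftrightarrow> k \<ge> 1 \<and> s \<in> verts A \<and> conn A s \<and> card (verts A) \<le> 2^(k-1)
     \<and> 2^(k-1) \<le> card (verts (path_tree A s))
     \<and> (card (verts A) = 2^(k-1) \<longrightarrow> graph_iso (T k) A \<and> graph_iso (T k) (path_tree A s))
     \<and> (card (verts (path_tree A s)) = 2^(k-1) \<longrightarrow> card (verts A) = 2^(k-1))
     \<and> subgraph_iso (T k) (path_tree A s)"

lemma base_pt: "verts (path_tree ({s}, {}) s) = {[s]}"
proof (rule set_eqI)
  fix p :: "'a list"
  show "p \<in> verts (path_tree ({s}, {}) s) \<longleftrightarrow> p \<in> {[s]}"
  proof
    assume "p \<in> verts (path_tree ({s}, {}) s)"
    then have "p \<noteq> []" "distinct p" "set p \<subseteq> {s}" by (auto simp: pt_verts is_path_def)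
    then obtain a t where p: "p = a # t" "a = s" "s \<notin> set t" "set t \<subseteq> {s}" by (cases p) auto
    have "t = []"
    proof (cases t)
      case (Cons b u)
      then have "b \<in> set t" by simp
      then have "b = s" using p(4) by blast
      then show ?thesis using p(3) Cons by simp
    qed simp
    then show "p \<in> {[s]}" using p by simp
  qed (simp add: pt_verts)
qed

lemma base_pt_edges: "edges (path_tree ({s}, {}) s) = {}"
proof -
  have "\<not> is_path ({s}, {}) (p @ [v])" if "is_path ({s}, {}) p" for p and v :: 'a
  proof
    assume a: "is_path ({s}, {}) (p @ [v])"
    have "p \<noteq> []" using that by (simp add: is_path_def)
    then show False using a is_path_snoc[of p "({s},{})" v] by (auto simp: adj_def)
  qed
  then show ?thesis by (auto simp: pt_edges)
qed

lemma inv_base: "ainv 1 ({s}, {}) s"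
proof -
  have T1: "T 1 = ({0}, {})" by (simp add: numeral_eq_Suc)
  have c: "conn ({s}, {}) s" unfolding conn_def by (auto intro!: exI[of _ "[s]"])
  have i1: "graph_iso (T 1) ({s}, {})" unfolding graph_iso_def T1
    by (intro exI[of _ "\<lambda>_. s"]) (auto simp: bij_betw_def)
  have i2: "graph_iso (T 1) (path_tree ({s}, {}) s)" unfolding graph_iso_def T1 base_pt base_pt_edges
    by (intro exI[of _ "\<lambda>_. [s]"]) (auto simp: bij_betw_def)
  have i3: "subgraph_iso (T 1) (path_tree ({s}, {}) s)" unfolding subgraph_iso_def T1 base_pt base_pt_edges
    by (intro exI[of _ "\<lambda>_. [s]"]) auto
  show ?thesis unfolding ainv_def using c i1 i2 i3 base_pt[of s] by simp
qed

lemma atom_inv: "atom k A s \<Longrightarrow> ainv k A s"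
proof (induction rule: atom.induct)
  case (base s) then show ?case by (rule inv_base)
next
  case (step H k A s)
  interpret stp H A s
    using step.hyps step.IH by (unfold_locales) (auto simp: ainv_def)
  define n where "n = (2::nat)^(k-1)"
  have k: "k \<ge> 1" using step.IH by (simp add: ainv_def)
  have n2: "(2::nat)^(Suc k - 1) = 2 * n" using k n_def by (cases k) auto
  have IH: "s \<in> verts A" "conn A s" "card (verts A) \<le> n" "n \<le> card PA"
    "card (verts A) = n \<Longrightarrow> graph_iso (T k) A \<and> graph_iso (T k) (path_tree A s)"
    "card PA = n \<Longrightarrow> card (verts A) = n" "subgraph_iso (T k) (path_tree A s)"
    using step.IH unfolding ainv_def n_def by auto
  have c1: "s \<in> verts H" using IH sub by auto
  have c2: "conn H s" using connH IH by simp
  have c3: "card (verts H) \<le> 2 * n" using card_H card_I_le IH by simp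
  have c4: "2 * n \<le> card PH" using card_PH_ge IH by simp
  have c5: "graph_iso (T (Suc k)) H \<and> graph_iso (T (Suc k)) (path_tree H s)" if "card (verts H) = 2 * n"
  proof -
    have "card (verts A) = n" "card I = card (verts A)" using that card_H card_I_le IH by auto
    then have p: pend using pend_card by simp
    then show ?thesis using step_iso_H[OF k p] step_iso_PT[OF k p] IH(5) \<open>card (verts A) = n\<close> by simp
  qed
  have c6: "card (verts H) = 2 * n" if "card PH = 2 * n"
  proof -
    have p: pend using nonpend[OF IH(2)] that IH(4) by linarith
    have "card PA = n" using card_PH_ge that IH(4) by simp
    then have "card (verts A) = n" using IH(6) by simp
    then show ?thesis using card_H pend_card p by simp
  qed
  have c7: "subgraph_iso (T (Suc k)) (path_tree H s)" using step_emb[OF k IH(7)] .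
  show ?case unfolding ainv_def n2 using c1 c2 c3 c4 c5 c6 c7 by simp
qed

theorem lemma1:
  fixes A :: "'a graph" and s :: 'a and k :: nat
  assumes "k \<ge> 1" and "atom k A s"
  shows "subgraph_iso (T k) (path_tree A s) \<and>
         (graph_iso (T k) (path_tree A s) \<longleftrightarrow> graph_iso A (T k))"
proof -
  have I: "ainv k A s" using atom_inv[OF assms(2)] .
  have cT: "card (verts (T k)) = 2^(k-1)" using T_verts[OF assms(1)] by simp
  have "graph_iso (T k) (path_tree A s) \<longleftrightarrow> graph_iso A (T k)"
  proof
    assume "graph_iso (T k) (path_tree A s)"
    then have "card (verts (path_tree A s)) = 2^(k-1)"
      using cT unfolding graph_iso_def by (metis bij_betw_same_card)
    then have "card (verts A) = 2^(k-1)" using I by (simp add: ainv_def)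
    then have "graph_iso (T k) A" using I by (simp add: ainv_def)
    then show "graph_iso A (T k)" by (rule graph_iso_sym)
  next
    assume "graph_iso A (T k)"
    then have "card (verts A) = 2^(k-1)"
      using cT unfolding graph_iso_def by (metis bij_betw_same_card)
    then show "graph_iso (T k) (path_tree A s)" using I by (simp add: ainv_def)
  qed
  then show ?thesis using I by (simp add: ainv_def)
qed

end
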